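(* Let $m\geq 2$ be an integer and let $H$ be $\mathrm{Sym}(m)$ or $\mathrm{Alt}(m)$ acting on the set of $2$-element subsets of $\{1,\ldots,m\}$. If $H$ contains a permutation $g$ having at most four cycles in this action, then $m\leq 9$.
   Context: The number of cycles of a permutation is the number of orbits of the cyclic group it generates, fixed points included. *)

theory Defs
  imports "HOL-Combinatorics.Combinatorics"
begin

definition two_subsets :: "nat \<Rightarrow> nat set set" where
  "two_subsets m = {S. S \<subseteq> {1..m} \<and> card S = 2}"

text \<open>Number of cycles of the permutation induced by g on the 2-subsets of {1..m}:
  the number of orbits of the cyclic group generated by the induced map S \<mapsto> g ` S
  (fixed points included).\<close>
definition pair_cycles :: "nat \<Rightarrow> (nat \<Rightarrow> nat) \<Rightarrow> nat" where
  "pair_cycles m g = card ((\<lambda>S. orbit (\<lambda>T. g ` T) S) ` two_subsets m)"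

end

theory Submission
  imports Defs
begin

definition pinv :: "(nat \<Rightarrow> nat) \<Rightarrow> nat set \<Rightarrow> nat set set \<times> nat" where
  "pinv g S = (orbit g ` S, LEAST n. 0 < n \<and> (\<exists>a\<in>S. (g^^n) a \<in> S - {a}))"

lemma pinv_step:
  assumes "permutation g"
  shows "pinv g (g ` S) = pinv g S"
proof -
  have inj: "inj g" using permutation_bijective[OF assms] by (simp add: bij_is_inj)
  have 1: "orbit g ` (g ` S) = orbit g ` S"
    using permutation_orbit_step[OF assms] by (auto simp: image_image)
  have 2: "(\<exists>a\<in>g ` S. (g^^n) a \<in> g ` S - {a}) \<longleftrightarrow> (\<exists>a\<in>S. (g^^n) a \<in> S - {a})" for n
  proof -
    have "(g^^n) (g a) = g ((g^^n) a)" for a by (simp add: funpow_swap1)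
    moreover have "g x \<in> g ` S - {g a} \<longleftrightarrow> x \<in> S - {a}" for x a
      using inj by (auto simp: inj_eq inj_image_mem_iff)
    ultimately show ?thesis by auto
  qed
  show ?thesis unfolding pinv_def using 1 2 by simp
qed

lemma pinv_orbit:
  assumes "permutation g" "T \<in> orbit (\<lambda>T. g ` T) S"
  shows "pinv g T = pinv g S"
  using assms(2)
proof induction
  case base then show ?case using pinv_step[OF assms(1)] by simp
next
  case (step y) then show ?case using pinv_step[OF assms(1)] by simp
qed

lemma card_pinv_le:
  assumes "permutation g"
  shows "card (pinv g ` two_subsets m) \<le> pair_cycles m g"
proof -
  let ?O = "\<lambda>S. orbit (\<lambda>T. g ` T) S"
  define h where "h X = pinv g (SOME x. x \<in> X)" for X
  have "h (?O S) = pinv g S" for S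
  proof -
    have "g ` S \<in> ?O S" by (rule orbit.base)
    then have "(SOME x. x \<in> ?O S) \<in> ?O S" by (rule someI)
    then show ?thesis unfolding h_def by (rule pinv_orbit[OF assms])
  qed
  then have "pinv g ` two_subsets m = h ` (?O ` two_subsets m)"
    by (simp add: image_image)
  moreover have "finite (two_subsets m)"
    by (rule finite_subset[of _ "Pow {1..m}"]) (auto simp: two_subsets_def)
  ultimately show ?thesis unfolding pair_cycles_def
    by (simp add: card_image_le)
qed

lemma pinv_dist:
  assumes perm: "permutation g" and d: "0 < d" "2*d \<le> funpow_dist1 g a a"
  shows "(g^^d) a \<noteq> a" and "snd (pinv g {a, (g^^d) a}) = d"
proof -
  let ?L = "funpow_dist1 g a a"
  have self: "a \<in> orbit g a" using permutation_self_in_orbit[OF perm] .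
  show ne: "(g^^d) a \<noteq> a" using funpow_dist1_least[of d g a a] d by simp
  let ?b = "(g^^d) a"
  have "(LEAST n. 0 < n \<and> (\<exists>x\<in>{a, ?b}. (g^^n) x \<in> {a, ?b} - {x})) = d"
  proof (rule Least_equality)
    show "0 < d \<and> (\<exists>x\<in>{a, ?b}. (g^^d) x \<in> {a, ?b} - {x})" using d ne by auto
  next
    fix n assume P: "0 < n \<and> (\<exists>x\<in>{a, ?b}. (g^^n) x \<in> {a, ?b} - {x})"
    show "d \<le> n"
    proof (rule ccontr)
      assume nd: "\<not> d \<le> n"
      from P obtain x where x: "x \<in> {a, ?b}" "(g^^n) x \<in> {a, ?b} - {x}" by blast
      show False
      proof (cases "x = a")
        case True
        then have "(g^^n) a = (g^^d) a" using x by auto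
        moreover have "(g^^n) a \<noteq> (g^^d) a"
          using funpow_neq_less_funpow_dist1[OF self, of n d] nd d by simp
        ultimately show False by simp
      next
        case False
        then have xb: "x = ?b" using x by auto
        then have "(g^^n) ((g^^d) a) = a" using x False by auto
        then have "(g^^(n+d)) a = a" by (simp add: funpow_add)
        moreover have "(g^^(n+d)) a \<noteq> a"
          using funpow_dist1_least[of "n+d" g a a] nd d P by simp
        ultimately show False by simp
      qed
    qed
  qed
  then show "snd (pinv g {a, (g^^d) a}) = d" by (simp add: pinv_def)
qed

lemma orbit_eq_of_mem:
  assumes perm: "permutation g" and "b \<in> orbit g a"
  shows "orbit g b = orbit g a"
proof
  show "orbit g b \<subseteq> orbit g a" using assms(2) orbit_trans by fast
  have "a \<in> orbit g b"
    using orbit_swap[OF permutation_self_in_orbit[OF perm] assms(2)] .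
  then show "orbit g a \<subseteq> orbit g b" using orbit_trans by fast
qed

lemma card_orbit_dist:
  assumes perm: "permutation g"
  shows "card (orbit g a) = funpow_dist1 g a a" "finite (orbit g a)"
proof -
  have self: "a \<in> orbit g a" using permutation_self_in_orbit[OF perm] .
  show "card (orbit g a) = funpow_dist1 g a a"
    unfolding orbit_conv_funpow_dist1[OF self]
    by (simp add: card_image inj_on_funpow_dist1[OF self])
  show "finite (orbit g a)" using finite_orbit[OF self] .
qed

theorem lemma3p3:
  fixes m :: nat and H :: "(nat \<Rightarrow> nat) set" and g :: "nat \<Rightarrow> nat"
  assumes "m \<ge> 2"
    and "H = {p. p permutes {1..m}} \<or> H = {p. p permutes {1..m} \<and> evenperm p}"
    and "g \<in> H"
    and "pair_cycles m g \<le> 4"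
  shows "m \<le> 9"
proof (rule ccontr)
  assume m10: "\<not> m \<le> 9"
  have gp: "g permutes {1..m}" using assms(2,3) by auto
  have perm: "permutation g" using gp by (auto simp: permutation_permutes)
  define Cyc where "Cyc = orbit g ` {1..m}"
  define rep where "rep K = (SOME a. a \<in> K)" for K :: "nat set"
  define TS where "TS = two_subsets m"
  have self: "a \<in> orbit g a" for a using permutation_self_in_orbit[OF perm] .
  have osub: "a \<in> {1..m} \<Longrightarrow> orbit g a \<subseteq> {1..m}" for a
    using permutes_orbit_subset[OF gp] .
  have finC: "finite Cyc" unfolding Cyc_def by simp
  have finK: "K \<in> Cyc \<Longrightarrow> finite K" for K using card_orbit_dist(2)[OF perm] unfolding Cyc_def by auto
  have rep: "rep K \<in> K" "orbit g (rep K) = K" "rep K \<in> {1..m}" if "K \<in> Cyc" for K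
  proof -
    from that obtain a where a: "a \<in> {1..m}" "K = orbit g a" unfolding Cyc_def by auto
    show r: "rep K \<in> K" unfolding rep_def using a self by (metis someI)
    show "orbit g (rep K) = K" using orbit_eq_of_mem[OF perm] r a by simp
    show "rep K \<in> {1..m}" using r a osub by blast
  qed
  have repinj: "inj_on rep Cyc"
    by (intro inj_onI) (metis rep(2))
  have Kdist: "card K = funpow_dist1 g (rep K) (rep K)" if "K \<in> Cyc" for K
    using card_orbit_dist(1)[OF perm, of "rep K"] rep(2)[OF that] by simp
  define A where "A K = (\<lambda>d. pinv g {rep K, (g^^d)(rep K)}) ` {1..card K div 2}" for K
  define B where "B = (\<lambda>Q. pinv g (rep ` Q)) ` {Q. Q \<subseteq> Cyc \<and> card Q = 2}"
  have Afacts: "A K \<subseteq> pinv g ` TS" "card (A K) = card K div 2" "\<forall>v\<in>A K. fst v = {K}"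
    if K: "K \<in> Cyc" for K
  proof -
    let ?a = "rep K"
    have dd: "(g^^d) ?a \<noteq> ?a" "snd (pinv g {?a, (g^^d) ?a}) = d" if "d \<in> {1..card K div 2}" for d
    proof -
      have "0 < d" "2*d \<le> funpow_dist1 g ?a ?a" using that Kdist[OF K] by auto
      then show "(g^^d) ?a \<noteq> ?a" "snd (pinv g {?a, (g^^d) ?a}) = d"
        using pinv_dist[OF perm] by blast+
    qed
    have fs: "fst (pinv g {?a, (g^^d) ?a}) = {K}" for d
    proof -
      have "orbit g ((g^^d) ?a) = orbit g ?a"
        by (rule orbit_eq_of_mem[OF perm]) (rule funpow_in_orbit[OF self])
      then show ?thesis using rep(2)[OF K] by (simp add: pinv_def)
    qed
    show "A K \<subseteq> pinv g ` TS"
    proof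
      fix v assume "v \<in> A K"
      then obtain d where d: "d \<in> {1..card K div 2}" "v = pinv g {?a, (g^^d) ?a}"
        unfolding A_def by auto
      have "(g^^d) ?a \<in> {1..m}"
        using osub[OF rep(3)[OF K]] funpow_in_orbit[OF self[of ?a], of d] by auto
      then have "{?a, (g^^d) ?a} \<in> TS"
        using rep(3)[OF K] dd(1)[OF d(1)] by (auto simp: TS_def two_subsets_def)
      then show "v \<in> pinv g ` TS" using d by auto
    qed
    have "inj_on (\<lambda>d. pinv g {rep K, (g^^d)(rep K)}) {1..card K div 2}"
      by (intro inj_onI) (metis dd(2))
    then show "card (A K) = card K div 2" unfolding A_def by (simp add: card_image)
    show "\<forall>v\<in>A K. fst v = {K}" unfolding A_def using fs by auto
  qed
  have fstB: "fst (pinv g (rep ` Q)) = Q" if "Q \<subseteq> Cyc" for Q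
  proof -
    have "(\<lambda>K. orbit g (rep K)) ` Q = (\<lambda>K. K) ` Q"
      by (rule image_cong) (use rep(2) that in auto)
    then have "orbit g ` rep ` Q = Q" by (simp add: image_image)
    then show ?thesis by (simp add: pinv_def)
  qed
  have Bsub: "B \<subseteq> pinv g ` TS"
  proof
    fix v assume "v \<in> B"
    then obtain Q where Q: "Q \<subseteq> Cyc" "card Q = 2" "v = pinv g (rep ` Q)" unfolding B_def by auto
    have "card (rep ` Q) = card Q" by (rule card_image[OF inj_on_subset[OF repinj Q(1)]])
    then have "card (rep ` Q) = 2" using Q(2) by simp
    moreover have "rep ` Q \<subseteq> {1..m}" using Q rep(3) by auto
    ultimately have "rep ` Q \<in> TS" by (simp add: TS_def two_subsets_def)
    then show "v \<in> pinv g ` TS" using Q by auto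
  qed
  have cardB: "card B = card Cyc choose 2"
  proof -
    have "inj_on (\<lambda>Q. pinv g (rep ` Q)) {Q. Q \<subseteq> Cyc \<and> card Q = 2}"
      by (intro inj_onI) (metis (mono_tags, lifting) fstB mem_Collect_eq)
    then show ?thesis unfolding B_def using n_subsets[OF finC] by (simp add: card_image)
  qed
  have Bfst: "\<forall>v\<in>B. card (fst v) = 2" unfolding B_def using fstB by auto
  define AA where "AA = (\<Union>K\<in>Cyc. A K)"
  have finA: "finite (A K)" for K unfolding A_def by simp
  have cardAA: "card AA = (\<Sum>K\<in>Cyc. card K div 2)"
  proof -
    have "card AA = (\<Sum>K\<in>Cyc. card (A K))" unfolding AA_def
    proof (rule card_UN_disjoint[OF finC])
      show "\<forall>i\<in>Cyc. finite (A i)" using finA by auto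
      show "\<forall>i\<in>Cyc. \<forall>j\<in>Cyc. i \<noteq> j \<longrightarrow> A i \<inter> A j = {}"
      proof (intro ballI impI)
        fix i j assume ij: "i \<in> Cyc" "j \<in> Cyc" "i \<noteq> j"
        show "A i \<inter> A j = {}"
        proof (rule ccontr)
          assume "A i \<inter> A j \<noteq> {}"
          then obtain v where "v \<in> A i" "v \<in> A j" by blast
          then have "fst v = {i}" "fst v = {j}" using Afacts(3) ij by blast+
          then show False using ij by simp
        qed
      qed
    qed
    also have "\<dots> = (\<Sum>K\<in>Cyc. card K div 2)" using Afacts(2) by simp
    finally show ?thesis .
  qed
  have disj: "AA \<inter> B = {}"
  proof (rule ccontr)
    assume "AA \<inter> B \<noteq> {}"
    then obtain v K where v: "K \<in> Cyc" "v \<in> A K" "v \<in> B" unfolding AA_def by blast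
    then have "fst v = {K}" "card (fst v) = 2" using Afacts(3) Bfst by blast+
    then show False by simp
  qed
  have finB: "finite B" unfolding B_def
    by (rule finite_imageI, rule finite_subset[of _ "Pow Cyc"]) (use finC in auto)
  have "card (AA \<union> B) \<le> card (pinv g ` TS)"
  proof (rule card_mono)
    show "finite (pinv g ` TS)" unfolding TS_def
      by (rule finite_imageI, rule finite_subset[of _ "Pow {1..m}"]) (auto simp: two_subsets_def)
    show "AA \<union> B \<subseteq> pinv g ` TS" using Afacts(1) Bsub unfolding AA_def by auto
  qed
  moreover have "card (AA \<union> B) = card AA + card B"
    using card_Un_disjoint[OF _ finB disj] finA finC unfolding AA_def by auto
  moreover have "card (pinv g ` TS) \<le> 4"
    using card_pinv_le[OF perm, of m] assms(4) unfolding TS_def by simp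
  ultimately have bound: "(\<Sum>K\<in>Cyc. card K div 2) + (card Cyc choose 2) \<le> 4"
    using cardAA cardB by simp
  have UC: "\<Union>Cyc = {1..m}"
  proof
    show "\<Union>Cyc \<subseteq> {1..m}" unfolding Cyc_def using osub by blast
    show "{1..m} \<subseteq> \<Union>Cyc" unfolding Cyc_def using self by blast
  qed
  have pw: "pairwise disjnt Cyc"
  proof (rule pairwiseI)
    fix X Y assume XY: "X \<in> Cyc" "Y \<in> Cyc" "X \<noteq> Y"
    show "disjnt X Y"
    proof (rule ccontr)
      assume "\<not> disjnt X Y"
      then obtain x where x: "x \<in> X" "x \<in> Y" by (auto simp: disjnt_def)
      obtain a b where ab: "X = orbit g a" "Y = orbit g b" using XY unfolding Cyc_def by auto
      have "orbit g x = orbit g a" using x(1) ab(1) orbit_eq_of_mem[OF perm] by blast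
      moreover have "orbit g x = orbit g b" using x(2) ab(2) orbit_eq_of_mem[OF perm] by blast
      ultimately have "orbit g x = X" "orbit g x = Y" using ab by simp_all
      then show False using XY by simp
    qed
  qed
  have "m = (\<Sum>K\<in>Cyc. card K)" using card_Union_disjoint[OF pw finK] UC by simp
  also have "\<dots> \<le> (\<Sum>K\<in>Cyc. 2 * (card K div 2) + 1)" by (rule sum_mono) simp
  also have "\<dots> = (\<Sum>K\<in>Cyc. 2 * (card K div 2)) + (\<Sum>K\<in>Cyc. 1)"
    by (rule sum.distrib)
  also have "\<dots> = 2 * (\<Sum>K\<in>Cyc. card K div 2) + card Cyc"
    by (simp add: sum_distrib_left)
  finally have msum: "m \<le> 2 * (\<Sum>K\<in>Cyc. card K div 2) + card Cyc" .
  define r where "r = card Cyc"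
  define S where "S = (\<Sum>K\<in>Cyc. card K div 2)"
  have b1: "S + (r choose 2) \<le> 4" and b2: "m \<le> 2 * S + r"
    using bound msum unfolding r_def S_def by auto
  show False
  proof (cases "r \<ge> 4")
    case True
    have "4 choose 2 \<le> r choose 2" using binomial_right_mono[OF True] .
    then show False using b1 by (simp add: numeral_eq_Suc)
  next
    case False
    then have "r = 0 \<or> r = 1 \<or> r = 2 \<or> r = 3" by auto
    then show False using b1 b2 m10 by (auto simp: numeral_eq_Suc)
  qed
qed

end
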